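(* Let $\mathbb X$ be a Cornish space of type $F$ and $\mathbf A=E(\mathbb X)$. Then the lattice of congruences of $\mathbf A$ is dually isomorphic to the lattice $\mathrm{Sub}\,\mathbb X$ of topologically closed substructures of $\mathbb X$ (including the empty one). In particular, $\mathbf A$ is simple if and only if $\mathbb X$ has no non-empty proper closed substructures.
   Context: $F=F^+\,\dot\cup\,F^-$ is a set of unary operation symbols. A Cornish space of type $F$ is a Priestley space $\langle X;\le,\mathscr T\rangle$ with unary operations $f^{\mathbb X}$ ($f\in F$) that are continuous order-preserving for $f\in F^+$ and continuous order-reversing for $f\in F^-$. A closed substructure is a topologically closed subset closed under every $f^{\mathbb X}$. $E(\mathbb X)$ is the Cornish algebra on the set of continuous order-preserving maps $\alpha\colon\langle X;\le,\mathscr T\rangle\to\mathbbm 2$ (the discrete two-element chain), with pointwise lattice operations and bounds, and $f^{E(\mathbb X)}(\alpha)=\alpha\circ f^{\mathbb X}$ for $f\in F^+$, $f^{E(\mathbb X)}(\alpha)=c\circ\alpha\circ f^{\mathbb X}$ for $f\in F^-$, where $c$ is Boolean complement on $\{0,1\}$. *)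

theory Defs
  imports "HOL-Analysis.Analysis"
begin

definition up_set :: "'a topology \<Rightarrow> ('a \<Rightarrow> 'a \<Rightarrow> bool) \<Rightarrow> 'a set \<Rightarrow> bool" where
  "up_set T le U \<longleftrightarrow> U \<subseteq> topspace T \<and>
     (\<forall>a\<in>U. \<forall>b\<in>topspace T. le a b \<longrightarrow> b \<in> U)"

definition priestley_space :: "'a topology \<Rightarrow> ('a \<Rightarrow> 'a \<Rightarrow> bool) \<Rightarrow> bool" where
  "priestley_space T le \<longleftrightarrow>
     compact_space T \<and>
     (\<forall>x\<in>topspace T. le x x) \<and>
     (\<forall>x\<in>topspace T. \<forall>y\<in>topspace T. le x y \<and> le y x \<longrightarrow> x = y) \<and>
     (\<forall>x\<in>topspace T. \<forall>y\<in>topspace T. \<forall>z\<in>topspace T. le x y \<and> le y z \<longrightarrow> le x z) \<and>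
     (\<forall>x\<in>topspace T. \<forall>y\<in>topspace T. \<not> le x y \<longrightarrow>
        (\<exists>U. openin T U \<and> closedin T U \<and> up_set T le U \<and> x \<in> U \<and> y \<notin> U))"

text \<open>Cornish space of type F = Fp (disjoint union) Fm: the operation symbols f are
  interpreted by ops f.\<close>

definition cornish_space ::
  "'a topology \<Rightarrow> ('a \<Rightarrow> 'a \<Rightarrow> bool) \<Rightarrow> 'f set \<Rightarrow> 'f set \<Rightarrow> ('f \<Rightarrow> 'a \<Rightarrow> 'a) \<Rightarrow> bool" where
  "cornish_space T le Fp Fm ops \<longleftrightarrow>
     priestley_space T le \<and> Fp \<inter> Fm = {} \<and>
     (\<forall>f\<in>Fp \<union> Fm. continuous_map T T (ops f)) \<and>
     (\<forall>f\<in>Fp. \<forall>x\<in>topspace T. \<forall>y\<in>topspace T. le x y \<longrightarrow> le (ops f x) (ops f y)) \<and>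
     (\<forall>f\<in>Fm. \<forall>x\<in>topspace T. \<forall>y\<in>topspace T. le x y \<longrightarrow> le (ops f y) (ops f x))"

definition closed_subs ::
  "'a topology \<Rightarrow> 'f set \<Rightarrow> 'f set \<Rightarrow> ('f \<Rightarrow> 'a \<Rightarrow> 'a) \<Rightarrow> 'a set set" where
  "closed_subs T Fp Fm ops =
     {S. closedin T S \<and> (\<forall>f\<in>Fp \<union> Fm. \<forall>x\<in>S. ops f x \<in> S)}"

text \<open>The Cornish algebra E(X). A map alpha : X -> 2 is represented by a function
  'a => bool which is False outside the carrier X = topspace T (False = 0, True = 1).\<close>

definition E_carrier :: "'a topology \<Rightarrow> ('a \<Rightarrow> 'a \<Rightarrow> bool) \<Rightarrow> ('a \<Rightarrow> bool) set" where
  "E_carrier T le =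
     {\<alpha>. (\<forall>x. x \<notin> topspace T \<longrightarrow> \<not> \<alpha> x) \<and>
          continuous_map T (discrete_topology (UNIV :: bool set)) \<alpha> \<and>
          (\<forall>x\<in>topspace T. \<forall>y\<in>topspace T. le x y \<longrightarrow> \<alpha> x \<le> \<alpha> y)}"

definition E_join :: "('a \<Rightarrow> bool) \<Rightarrow> ('a \<Rightarrow> bool) \<Rightarrow> ('a \<Rightarrow> bool)" where
  "E_join \<alpha> \<beta> = (\<lambda>x. \<alpha> x \<or> \<beta> x)"

definition E_meet :: "('a \<Rightarrow> bool) \<Rightarrow> ('a \<Rightarrow> bool) \<Rightarrow> ('a \<Rightarrow> bool)" where
  "E_meet \<alpha> \<beta> = (\<lambda>x. \<alpha> x \<and> \<beta> x)"

definition E_bot :: "'a topology \<Rightarrow> ('a \<Rightarrow> bool)" where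
  "E_bot T = (\<lambda>x. False)"

definition E_top :: "'a topology \<Rightarrow> ('a \<Rightarrow> bool)" where
  "E_top T = (\<lambda>x. x \<in> topspace T)"

definition E_op ::
  "'a topology \<Rightarrow> 'f set \<Rightarrow> ('f \<Rightarrow> 'a \<Rightarrow> 'a) \<Rightarrow> 'f \<Rightarrow> ('a \<Rightarrow> bool) \<Rightarrow> ('a \<Rightarrow> bool)" where
  "E_op T Fp ops f \<alpha> =
     (\<lambda>x. x \<in> topspace T \<and> (if f \<in> Fp then \<alpha> (ops f x) else \<not> \<alpha> (ops f x)))"

text \<open>Congruences of an algebra with binary operations join, meet, constants (which are
  automatically respected) and unary operations indexed by Fs.\<close>

definition Con_alg ::
  "'b set \<Rightarrow> ('b \<Rightarrow> 'b \<Rightarrow> 'b) \<Rightarrow> ('b \<Rightarrow> 'b \<Rightarrow> 'b) \<Rightarrow> 'f set \<Rightarrow> ('f \<Rightarrow> 'b \<Rightarrow> 'b)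
     \<Rightarrow> ('b \<times> 'b) set set" where
  "Con_alg A j m Fs u =
     {\<theta>. equiv A \<theta> \<and>
        (\<forall>a b c d. (a, b) \<in> \<theta> \<and> (c, d) \<in> \<theta> \<longrightarrow> (j a c, j b d) \<in> \<theta> \<and> (m a c, m b d) \<in> \<theta>) \<and>
        (\<forall>f\<in>Fs. \<forall>a b. (a, b) \<in> \<theta> \<longrightarrow> (u f a, u f b) \<in> \<theta>)}"

definition E_Con ::
  "'a topology \<Rightarrow> ('a \<Rightarrow> 'a \<Rightarrow> bool) \<Rightarrow> 'f set \<Rightarrow> 'f set \<Rightarrow> ('f \<Rightarrow> 'a \<Rightarrow> 'a)
     \<Rightarrow> (('a \<Rightarrow> bool) \<times> ('a \<Rightarrow> bool)) set set" where
  "E_Con T le Fp Fm ops = Con_alg (E_carrier T le) E_join E_meet (Fp \<union> Fm) (E_op T Fp ops)"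

definition E_simple ::
  "'a topology \<Rightarrow> ('a \<Rightarrow> 'a \<Rightarrow> bool) \<Rightarrow> 'f set \<Rightarrow> 'f set \<Rightarrow> ('f \<Rightarrow> 'a \<Rightarrow> 'a) \<Rightarrow> bool" where
  "E_simple T le Fp Fm ops \<longleftrightarrow>
     E_Con T le Fp Fm ops = {Id_on (E_carrier T le), E_carrier T le \<times> E_carrier T le}"

end

theory Submission
  imports Defs
begin


lemma bool_in_iff: "(b::bool) \<in> U \<longleftrightarrow> (b \<and> True \<in> U) \<or> (\<not> b \<and> False \<in> U)"
  by (cases b) auto

lemma cont_bool_iff:
  "continuous_map T (discrete_topology (UNIV::bool set)) \<alpha> \<longleftrightarrow>
     openin T {x\<in>topspace T. \<alpha> x} \<and> openin T {x\<in>topspace T. \<not> \<alpha> x}"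
proof
  assume c: "continuous_map T (discrete_topology (UNIV::bool set)) \<alpha>"
  have a: "\<forall>U. openin T {x\<in>topspace T. \<alpha> x \<in> U}"
    using c by (simp add: continuous_map_def)
  have "openin T {x\<in>topspace T. \<alpha> x \<in> {True}}" "openin T {x\<in>topspace T. \<alpha> x \<in> {False}}"
    using a by blast+
  then show "openin T {x\<in>topspace T. \<alpha> x} \<and> openin T {x\<in>topspace T. \<not> \<alpha> x}" by simp
next
  assume o: "openin T {x\<in>topspace T. \<alpha> x} \<and> openin T {x\<in>topspace T. \<not> \<alpha> x}"
  have "openin T {x\<in>topspace T. \<alpha> x \<in> U}" for U
  proof -
    have e: "{x\<in>topspace T. \<alpha> x \<in> U} = {x\<in>topspace T. \<alpha> x \<and> True \<in> U} \<union> {x\<in>topspace T. \<not> \<alpha> x \<and> False \<in> U}"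
      by (subst bool_in_iff) blast
    have 1: "openin T {x\<in>topspace T. \<alpha> x \<and> True \<in> U}"
      using o by (cases "True \<in> U") auto
    have 2: "openin T {x\<in>topspace T. \<not> \<alpha> x \<and> False \<in> U}"
      using o by (cases "False \<in> U") auto
    show ?thesis unfolding e using 1 2 by (rule openin_Un)
  qed
  then show "continuous_map T (discrete_topology (UNIV::bool set)) \<alpha>"
    by (simp add: continuous_map_def)
qed

lemma E_mem_iff:
  "\<alpha> \<in> E_carrier T le \<longleftrightarrow> (\<forall>x. \<alpha> x \<longrightarrow> x \<in> topspace T) \<and>
     openin T {x\<in>topspace T. \<alpha> x} \<and> openin T {x\<in>topspace T. \<not> \<alpha> x} \<and>
     (\<forall>x\<in>topspace T. \<forall>y\<in>topspace T. le x y \<longrightarrow> \<alpha> x \<longrightarrow> \<alpha> y)"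
  unfolding E_carrier_def cont_bool_iff by auto

lemma E_set:
  assumes "openin T S" "closedin T S" "\<forall>x\<in>S. \<forall>y\<in>topspace T. le x y \<longrightarrow> y \<in> S"
  shows "(\<lambda>x. x \<in> S) \<in> E_carrier T le"
proof -
  have s: "S \<subseteq> topspace T" using assms(1) openin_subset by auto
  have e1: "{x\<in>topspace T. x \<in> S} = S" using s by blast
  have e2: "{x\<in>topspace T. x \<notin> S} = topspace T - S" by blast
  have o2: "openin T (topspace T - S)" using assms(2) by (simp add: closedin_def)
  show ?thesis unfolding E_mem_iff e1 e2
    using s assms(1,3) o2 by blast
qed

lemma E_join_mem: "\<alpha> \<in> E_carrier T le \<Longrightarrow> \<beta> \<in> E_carrier T le \<Longrightarrow> E_join \<alpha> \<beta> \<in> E_carrier T le"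
proof -
  assume a: "\<alpha> \<in> E_carrier T le" and b: "\<beta> \<in> E_carrier T le"
  have e1: "{x\<in>topspace T. E_join \<alpha> \<beta> x} = {x\<in>topspace T. \<alpha> x} \<union> {x\<in>topspace T. \<beta> x}"
   and e2: "{x\<in>topspace T. \<not> E_join \<alpha> \<beta> x} = {x\<in>topspace T. \<not>\<alpha> x} \<inter> {x\<in>topspace T. \<not>\<beta> x}"
    by (auto simp: E_join_def)
  have o: "openin T {x\<in>topspace T. E_join \<alpha> \<beta> x}" "openin T {x\<in>topspace T. \<not> E_join \<alpha> \<beta> x}"
    unfolding e1 e2 using a b unfolding E_mem_iff by (meson openin_Un openin_Int)+
  have a': "\<forall>x. \<alpha> x \<longrightarrow> x \<in> topspace T" "\<forall>x\<in>topspace T. \<forall>y\<in>topspace T. le x y \<longrightarrow> \<alpha> x \<longrightarrow> \<alpha> y"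
    using a unfolding E_mem_iff by blast+
  have b': "\<forall>x. \<beta> x \<longrightarrow> x \<in> topspace T" "\<forall>x\<in>topspace T. \<forall>y\<in>topspace T. le x y \<longrightarrow> \<beta> x \<longrightarrow> \<beta> y"
    using b unfolding E_mem_iff by blast+
  have "\<forall>x. E_join \<alpha> \<beta> x \<longrightarrow> x \<in> topspace T" unfolding E_join_def using a'(1) b'(1) by blast
  moreover have "\<forall>x\<in>topspace T. \<forall>y\<in>topspace T. le x y \<longrightarrow> E_join \<alpha> \<beta> x \<longrightarrow> E_join \<alpha> \<beta> y"
    using a'(2) b'(2) unfolding E_join_def by blast
  ultimately show ?thesis unfolding E_mem_iff using o by blast
qed

lemma E_meet_mem: "\<alpha> \<in> E_carrier T le \<Longrightarrow> \<beta> \<in> E_carrier T le \<Longrightarrow> E_meet \<alpha> \<beta> \<in> E_carrier T le"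
proof -
  assume a: "\<alpha> \<in> E_carrier T le" and b: "\<beta> \<in> E_carrier T le"
  have e1: "{x\<in>topspace T. E_meet \<alpha> \<beta> x} = {x\<in>topspace T. \<alpha> x} \<inter> {x\<in>topspace T. \<beta> x}"
   and e2: "{x\<in>topspace T. \<not> E_meet \<alpha> \<beta> x} = {x\<in>topspace T. \<not>\<alpha> x} \<union> {x\<in>topspace T. \<not>\<beta> x}"
    by (auto simp: E_meet_def)
  have o: "openin T {x\<in>topspace T. E_meet \<alpha> \<beta> x}" "openin T {x\<in>topspace T. \<not> E_meet \<alpha> \<beta> x}"
    unfolding e1 e2 using a b unfolding E_mem_iff by (meson openin_Un openin_Int)+
  have a': "\<forall>x. \<alpha> x \<longrightarrow> x \<in> topspace T" "\<forall>x\<in>topspace T. \<forall>y\<in>topspace T. le x y \<longrightarrow> \<alpha> x \<longrightarrow> \<alpha> y"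
    using a unfolding E_mem_iff by blast+
  have b': "\<forall>x. \<beta> x \<longrightarrow> x \<in> topspace T" "\<forall>x\<in>topspace T. \<forall>y\<in>topspace T. le x y \<longrightarrow> \<beta> x \<longrightarrow> \<beta> y"
    using b unfolding E_mem_iff by blast+
  have "\<forall>x. E_meet \<alpha> \<beta> x \<longrightarrow> x \<in> topspace T" unfolding E_meet_def using a'(1) b'(1) by blast
  moreover have "\<forall>x\<in>topspace T. \<forall>y\<in>topspace T. le x y \<longrightarrow> E_meet \<alpha> \<beta> x \<longrightarrow> E_meet \<alpha> \<beta> y"
    using a'(2) b'(2) unfolding E_meet_def by blast
  ultimately show ?thesis unfolding E_mem_iff using o by blast
qed

lemma E_op_mem:
  assumes cs: "cornish_space T le Fp Fm ops" and f: "f \<in> Fp \<union> Fm" and a: "\<alpha> \<in> E_carrier T le"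
  shows "E_op T Fp ops f \<alpha> \<in> E_carrier T le"
proof -
  have c: "continuous_map T T (ops f)" using cs f by (auto simp: cornish_space_def)
  then have im: "ops f x \<in> topspace T" if "x \<in> topspace T" for x
    using that by (auto simp: continuous_map_def)
  have a1: "openin T {y\<in>topspace T. \<alpha> y}" "openin T {y\<in>topspace T. \<not> \<alpha> y}"
    and a2: "\<forall>x\<in>topspace T. \<forall>y\<in>topspace T. le x y \<longrightarrow> \<alpha> x \<longrightarrow> \<alpha> y"
    using a unfolding E_mem_iff by blast+
  have P: "openin T {x\<in>topspace T. ops f x \<in> {y\<in>topspace T. \<alpha> y}}"
    and N: "openin T {x\<in>topspace T. ops f x \<in> {y\<in>topspace T. \<not> \<alpha> y}}"
    using openin_continuous_map_preimage[OF c a1(1)] openin_continuous_map_preimage[OF c a1(2)] by blast+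
  have e1: "{x\<in>topspace T. ops f x \<in> {y\<in>topspace T. \<alpha> y}} = {x\<in>topspace T. \<alpha> (ops f x)}"
    and e2: "{x\<in>topspace T. ops f x \<in> {y\<in>topspace T. \<not> \<alpha> y}} = {x\<in>topspace T. \<not> \<alpha> (ops f x)}"
    using im by blast+
  have z: "\<forall>x. E_op T Fp ops f \<alpha> x \<longrightarrow> x \<in> topspace T" unfolding E_op_def by blast
  show ?thesis
  proof (cases "f \<in> Fp")
    case True
    then have m: "\<forall>x\<in>topspace T. \<forall>y\<in>topspace T. le x y \<longrightarrow> le (ops f x) (ops f y)"
      using cs by (auto simp: cornish_space_def)
    have q1: "{x\<in>topspace T. E_op T Fp ops f \<alpha> x} = {x\<in>topspace T. \<alpha> (ops f x)}"
      "{x\<in>topspace T. \<not> E_op T Fp ops f \<alpha> x} = {x\<in>topspace T. \<not> \<alpha> (ops f x)}"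
      using True unfolding E_op_def by auto
    have mo: "\<forall>x\<in>topspace T. \<forall>y\<in>topspace T. le x y \<longrightarrow> E_op T Fp ops f \<alpha> x \<longrightarrow> E_op T Fp ops f \<alpha> y"
    proof (intro ballI impI)
      fix x y assume xy: "x \<in> topspace T" "y \<in> topspace T" "le x y" "E_op T Fp ops f \<alpha> x"
      then have "\<alpha> (ops f x)" using True unfolding E_op_def by auto
      moreover have "le (ops f x) (ops f y)" using m xy by blast
      ultimately have "\<alpha> (ops f y)" using a2 im xy by blast
      then show "E_op T Fp ops f \<alpha> y" using True xy unfolding E_op_def by auto
    qed
    show ?thesis unfolding E_mem_iff q1 using z mo P N unfolding e1 e2 by blast
  next
    case False
    then have "f \<in> Fm" using f by auto
    then have m: "\<forall>x\<in>topspace T. \<forall>y\<in>topspace T. le x y \<longrightarrow> le (ops f y) (ops f x)"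
      using cs by (auto simp: cornish_space_def)
    have q1: "{x\<in>topspace T. E_op T Fp ops f \<alpha> x} = {x\<in>topspace T. \<not> \<alpha> (ops f x)}"
      "{x\<in>topspace T. \<not> E_op T Fp ops f \<alpha> x} = {x\<in>topspace T. \<alpha> (ops f x)}"
      using False unfolding E_op_def by auto
    have mo: "\<forall>x\<in>topspace T. \<forall>y\<in>topspace T. le x y \<longrightarrow> E_op T Fp ops f \<alpha> x \<longrightarrow> E_op T Fp ops f \<alpha> y"
    proof (intro ballI impI)
      fix x y assume xy: "x \<in> topspace T" "y \<in> topspace T" "le x y" "E_op T Fp ops f \<alpha> x"
      then have "\<not> \<alpha> (ops f x)" using False unfolding E_op_def by auto
      moreover have "le (ops f y) (ops f x)" using m xy by blast
      ultimately have "\<not> \<alpha> (ops f y)" using a2 im xy by blast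
      then show "E_op T Fp ops f \<alpha> y" using False xy unfolding E_op_def by auto
    qed
    show ?thesis unfolding E_mem_iff q1 using z mo P N unfolding e1 e2 by blast
  qed
qed



definition thY :: "'a topology \<Rightarrow> ('a \<Rightarrow> 'a \<Rightarrow> bool) \<Rightarrow> 'a set \<Rightarrow> (('a \<Rightarrow> bool) \<times> ('a \<Rightarrow> bool)) set" where
  "thY T le Y = {r. fst r \<in> E_carrier T le \<and> snd r \<in> E_carrier T le \<and> (\<forall>y\<in>Y. fst r y = snd r y)}"

definition Ysub :: "'a topology \<Rightarrow> (('a \<Rightarrow> bool) \<times> ('a \<Rightarrow> bool)) set \<Rightarrow> 'a set" where
  "Ysub T \<theta> = {x\<in>topspace T. \<forall>r\<in>\<theta>. fst r x = snd r x}"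

lemma thY_mem: "(a,b) \<in> thY T le Y \<longleftrightarrow> a \<in> E_carrier T le \<and> b \<in> E_carrier T le \<and> (\<forall>y\<in>Y. a y = b y)"
  by (simp add: thY_def)

lemma E_out: "\<alpha> \<in> E_carrier T le \<Longrightarrow> x \<notin> topspace T \<Longrightarrow> \<not> \<alpha> x"
  unfolding E_mem_iff by blast

lemma E_closed: assumes "\<alpha> \<in> E_carrier T le"
  shows "closedin T {x\<in>topspace T. \<alpha> x}" "closedin T {x\<in>topspace T. \<not> \<alpha> x}"
    "openin T {x\<in>topspace T. \<alpha> x}" "openin T {x\<in>topspace T. \<not> \<alpha> x}"
proof -
  have o: "openin T {x\<in>topspace T. \<alpha> x}" "openin T {x\<in>topspace T. \<not> \<alpha> x}"
    using assms unfolding E_mem_iff by blast+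
  have e: "topspace T - {x\<in>topspace T. \<alpha> x} = {x\<in>topspace T. \<not> \<alpha> x}"
    "topspace T - {x\<in>topspace T. \<not> \<alpha> x} = {x\<in>topspace T. \<alpha> x}" by blast+
  show "closedin T {x\<in>topspace T. \<alpha> x}" "closedin T {x\<in>topspace T. \<not> \<alpha> x}"
    unfolding closedin_def e using o by blast+
  show "openin T {x\<in>topspace T. \<alpha> x}" "openin T {x\<in>topspace T. \<not> \<alpha> x}" using o by blast+
qed

lemma diff_set_eq: "{x\<in>topspace T. \<alpha> x \<noteq> \<beta> x} =
   ({x\<in>topspace T. \<alpha> x} \<inter> {x\<in>topspace T. \<not> \<beta> x}) \<union> ({x\<in>topspace T. \<not> \<alpha> x} \<inter> {x\<in>topspace T. \<beta> x})"
  by blast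

lemma diff_open: "\<alpha> \<in> E_carrier T le \<Longrightarrow> \<beta> \<in> E_carrier T le \<Longrightarrow> openin T {x\<in>topspace T. \<alpha> x \<noteq> \<beta> x}"
  unfolding diff_set_eq by (intro openin_Un openin_Int; rule E_closed; assumption)

lemma diff_closed: "\<alpha> \<in> E_carrier T le \<Longrightarrow> \<beta> \<in> E_carrier T le \<Longrightarrow> closedin T {x\<in>topspace T. \<alpha> x \<noteq> \<beta> x}"
  unfolding diff_set_eq by (intro closedin_Un closedin_Int; rule E_closed; assumption)

lemma con_equiv: "\<theta> \<in> E_Con T le Fp Fm ops \<Longrightarrow> equiv (E_carrier T le) \<theta>"
  unfolding E_Con_def Con_alg_def by blast

lemma con_sub: "\<theta> \<in> E_Con T le Fp Fm ops \<Longrightarrow> (a,b) \<in> \<theta> \<Longrightarrow> a \<in> E_carrier T le \<and> b \<in> E_carrier T le"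
  using equiv_type[OF con_equiv] by blast

lemma con_refl: "\<theta> \<in> E_Con T le Fp Fm ops \<Longrightarrow> a \<in> E_carrier T le \<Longrightarrow> (a,a) \<in> \<theta>"
  using con_equiv by (metis equivE refl_onD)

lemma con_sym: "\<theta> \<in> E_Con T le Fp Fm ops \<Longrightarrow> (a,b) \<in> \<theta> \<Longrightarrow> (b,a) \<in> \<theta>"
  using con_equiv by (metis equivE symD)

lemma con_trans: "\<theta> \<in> E_Con T le Fp Fm ops \<Longrightarrow> (a,b) \<in> \<theta> \<Longrightarrow> (b,c) \<in> \<theta> \<Longrightarrow> (a,c) \<in> \<theta>"
  using con_equiv by (metis equivE transD)

lemma con_join: "\<theta> \<in> E_Con T le Fp Fm ops \<Longrightarrow> (a,b) \<in> \<theta> \<Longrightarrow> (c,d) \<in> \<theta> \<Longrightarrow> (E_join a c, E_join b d) \<in> \<theta>"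
  unfolding E_Con_def Con_alg_def by blast

lemma con_meet: "\<theta> \<in> E_Con T le Fp Fm ops \<Longrightarrow> (a,b) \<in> \<theta> \<Longrightarrow> (c,d) \<in> \<theta> \<Longrightarrow> (E_meet a c, E_meet b d) \<in> \<theta>"
  unfolding E_Con_def Con_alg_def by blast

lemma con_op: "\<theta> \<in> E_Con T le Fp Fm ops \<Longrightarrow> f \<in> Fp \<union> Fm \<Longrightarrow> (a,b) \<in> \<theta> \<Longrightarrow> (E_op T Fp ops f a, E_op T Fp ops f b) \<in> \<theta>"
  unfolding E_Con_def Con_alg_def by blast

lemma cover_ind:
  assumes con: "\<theta> \<in> E_Con T le Fp Fm ops" and fin: "finite P"
  shows "P \<subseteq> \<theta> \<Longrightarrow> p \<in> E_carrier T le \<Longrightarrow> q \<in> E_carrier T le \<Longrightarrow> (\<forall>x. p x \<longrightarrow> q x) \<Longrightarrow>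
     (\<forall>x\<in>topspace T. q x \<and> \<not> p x \<longrightarrow> (\<exists>r\<in>P. fst r x \<noteq> snd r x)) \<Longrightarrow> (p,q) \<in> \<theta>"
  using fin
proof (induction P arbitrary: p q rule: finite_induct)
  case empty
  have "p = q"
  proof
    fix x show "p x = q x"
    proof (cases "x \<in> topspace T")
      case True then show ?thesis using empty.prems(4,5) by blast
    next
      case False then show ?thesis using E_out[OF empty.prems(2)] E_out[OF empty.prems(3)] by blast
    qed
  qed
  then show ?case using con_refl[OF con empty.prems(2)] by simp
next
  case (insert r P)
  obtain \<gamma> \<delta> where r: "r = (\<gamma>, \<delta>)" by (cases r)
  have gd: "(\<gamma>, \<delta>) \<in> \<theta>" using insert.prems(1) r by blast
  have gA: "\<gamma> \<in> E_carrier T le" and dA: "\<delta> \<in> E_carrier T le" using con_sub[OF con gd] by blast+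
  define g where "g = E_meet \<gamma> \<delta>"
  define d where "d = E_join \<gamma> \<delta>"
  have mdd: "E_meet \<delta> \<delta> = \<delta>" "E_join \<delta> \<delta> = \<delta>" by (auto simp: E_meet_def E_join_def)
  have "(g, \<delta>) \<in> \<theta>" using con_meet[OF con gd con_refl[OF con dA]] mdd unfolding g_def by simp
  moreover have "(d, \<delta>) \<in> \<theta>" using con_join[OF con gd con_refl[OF con dA]] mdd unfolding d_def by simp
  ultimately have gdt: "(g, d) \<in> \<theta>" using con_sym[OF con] con_trans[OF con] by blast
  have gA': "g \<in> E_carrier T le" "d \<in> E_carrier T le" unfolding g_def d_def
    using gA dA by (simp_all add: E_meet_mem E_join_mem)
  define r' where "r' = E_meet q (E_join p g)"
  define s' where "s' = E_meet q (E_join p d)"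
  have pA: "p \<in> E_carrier T le" and qA: "q \<in> E_carrier T le" using insert.prems by blast+
  have r'A: "r' \<in> E_carrier T le" and s'A: "s' \<in> E_carrier T le"
    unfolding r'_def s'_def using pA qA gA' by (simp_all add: E_meet_mem E_join_mem)
  have rs: "(r', s') \<in> \<theta>" unfolding r'_def s'_def
    using con_meet[OF con con_refl[OF con qA] con_join[OF con con_refl[OF con pA] gdt]] .
  have pq: "\<forall>x. p x \<longrightarrow> q x" using insert.prems(4) .
  have cov: "\<forall>x\<in>topspace T. q x \<and> \<not> p x \<longrightarrow> (\<exists>r\<in>insert r P. fst r x \<noteq> snd r x)" using insert.prems(5) .
  have 1: "(p, r') \<in> \<theta>"
  proof (rule insert.IH)
    show "P \<subseteq> \<theta>" using insert.prems(1) by blast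
    show "p \<in> E_carrier T le" by (rule pA)
    show "r' \<in> E_carrier T le" by (rule r'A)
    show "\<forall>x. p x \<longrightarrow> r' x" using pq unfolding r'_def E_meet_def E_join_def by blast
    show "\<forall>x\<in>topspace T. r' x \<and> \<not> p x \<longrightarrow> (\<exists>r\<in>P. fst r x \<noteq> snd r x)"
    proof (intro ballI impI)
      fix x assume x: "x \<in> topspace T" "r' x \<and> \<not> p x"
      then have "q x" "g x" "\<not> p x" unfolding r'_def E_meet_def E_join_def by blast+
      then obtain r0 where r0: "r0 \<in> insert r P" "fst r0 x \<noteq> snd r0 x" using cov x by blast
      have "r0 \<noteq> r" using r0(2) \<open>g x\<close> r unfolding g_def E_meet_def by auto
      then show "\<exists>r\<in>P. fst r x \<noteq> snd r x" using r0 by blast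
    qed
  qed
  have 2: "(s', q) \<in> \<theta>"
  proof (rule insert.IH)
    show "P \<subseteq> \<theta>" using insert.prems(1) by blast
    show "s' \<in> E_carrier T le" by (rule s'A)
    show "q \<in> E_carrier T le" by (rule qA)
    show "\<forall>x. s' x \<longrightarrow> q x" unfolding s'_def E_meet_def by blast
    show "\<forall>x\<in>topspace T. q x \<and> \<not> s' x \<longrightarrow> (\<exists>r\<in>P. fst r x \<noteq> snd r x)"
    proof (intro ballI impI)
      fix x assume x: "x \<in> topspace T" "q x \<and> \<not> s' x"
      then have "q x" "\<not> d x" "\<not> p x" unfolding s'_def E_meet_def E_join_def by blast+
      then obtain r0 where r0: "r0 \<in> insert r P" "fst r0 x \<noteq> snd r0 x" using cov x by blast
      have "r0 \<noteq> r" using r0(2) \<open>\<not> d x\<close> r unfolding d_def E_join_def by auto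
      then show "\<exists>r\<in>P. fst r x \<noteq> snd r x" using r0 by blast
    qed
  qed
  show ?case using con_trans[OF con 1 con_trans[OF con rs 2]] .
qed



lemma cs_facts:
  assumes "cornish_space T le Fp Fm ops"
  shows "compact_space T" "\<And>x y. x \<in> topspace T \<Longrightarrow> y \<in> topspace T \<Longrightarrow> le x y \<Longrightarrow> le y x \<Longrightarrow> x = y"
    "\<And>x y. x \<in> topspace T \<Longrightarrow> y \<in> topspace T \<Longrightarrow> \<not> le x y \<Longrightarrow>
        \<exists>U. openin T U \<and> closedin T U \<and> up_set T le U \<and> x \<in> U \<and> y \<notin> U"
    "\<And>f x. f \<in> Fp \<union> Fm \<Longrightarrow> x \<in> topspace T \<Longrightarrow> ops f x \<in> topspace T"
proof -
  have p: "priestley_space T le" using assms by (simp add: cornish_space_def)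
  show "compact_space T" using p by (simp add: priestley_space_def)
  show "\<And>x y. x \<in> topspace T \<Longrightarrow> y \<in> topspace T \<Longrightarrow> le x y \<Longrightarrow> le y x \<Longrightarrow> x = y"
    using p unfolding priestley_space_def by blast
  show "\<And>x y. x \<in> topspace T \<Longrightarrow> y \<in> topspace T \<Longrightarrow> \<not> le x y \<Longrightarrow>
        \<exists>U. openin T U \<and> closedin T U \<and> up_set T le U \<and> x \<in> U \<and> y \<notin> U"
    using p unfolding priestley_space_def by blast
  show "\<And>f x. f \<in> Fp \<union> Fm \<Longrightarrow> x \<in> topspace T \<Longrightarrow> ops f x \<in> topspace T"
  proof -
    fix f x assume "f \<in> Fp \<union> Fm" "x \<in> topspace T"
    then have "continuous_map T T (ops f)" using assms by (simp add: cornish_space_def)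
    then show "ops f x \<in> topspace T" using \<open>x \<in> topspace T\<close> by (auto simp: continuous_map_def)
  qed
qed

lemma thY_con:
  assumes cs: "cornish_space T le Fp Fm ops" and Y: "Y \<subseteq> topspace T"
    and cl: "\<forall>f\<in>Fp \<union> Fm. \<forall>x\<in>Y. ops f x \<in> Y"
  shows "thY T le Y \<in> E_Con T le Fp Fm ops"
  unfolding E_Con_def Con_alg_def
proof (intro CollectI conjI allI impI ballI)
  show "equiv (E_carrier T le) (thY T le Y)"
  proof (rule equivI)
    show "thY T le Y \<subseteq> E_carrier T le \<times> E_carrier T le" unfolding thY_def by auto
    show "refl_on (E_carrier T le) (thY T le Y)" by (rule refl_onI) (simp add: thY_mem)
    show "sym (thY T le Y)" by (rule symI) (simp add: thY_mem)
    show "trans (thY T le Y)" by (rule transI) (simp add: thY_mem)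
  qed
next
  fix a b c d assume h: "(a, b) \<in> thY T le Y \<and> (c, d) \<in> thY T le Y"
  then show "(E_join a c, E_join b d) \<in> thY T le Y"
    unfolding thY_mem using E_join_mem[of a T le c] E_join_mem[of b T le d] by (simp add: E_join_def)
  from h show "(E_meet a c, E_meet b d) \<in> thY T le Y"
    unfolding thY_mem using E_meet_mem[of a T le c] E_meet_mem[of b T le d] by (simp add: E_meet_def)
next
  fix f a b assume f: "f \<in> Fp \<union> Fm" and h: "(a, b) \<in> thY T le Y"
  have "\<forall>y\<in>Y. E_op T Fp ops f a y = E_op T Fp ops f b y"
  proof
    fix y assume "y \<in> Y"
    then have "ops f y \<in> Y" using cl f by blast
    then have "a (ops f y) = b (ops f y)" using h by (simp add: thY_mem)
    then show "E_op T Fp ops f a y = E_op T Fp ops f b y" by (simp add: E_op_def)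
  qed
  then show "(E_op T Fp ops f a, E_op T Fp ops f b) \<in> thY T le Y"
    using h E_op_mem[OF cs f] by (simp add: thY_mem)
qed

lemma Ysub_closed:
  assumes cs: "cornish_space T le Fp Fm ops" and con: "\<theta> \<in> E_Con T le Fp Fm ops"
  shows "Ysub T \<theta> \<in> closed_subs T Fp Fm ops"
proof -
  let ?G = "(\<lambda>r. {x\<in>topspace T. fst r x \<noteq> snd r x}) ` \<theta>"
  have oG: "\<forall>U\<in>?G. openin T U"
  proof
    fix U assume "U \<in> ?G"
    then obtain a b where "(a,b) \<in> \<theta>" "U = {x\<in>topspace T. a x \<noteq> b x}" by auto
    then show "openin T U" using con_sub[OF con] diff_open by blast
  qed
  have o: "openin T (\<Union>?G)" by (rule openin_Union) (use oG in blast)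
  have e: "Ysub T \<theta> = topspace T - \<Union>?G" unfolding Ysub_def by blast
  have c: "closedin T (Ysub T \<theta>)" unfolding e using o by (simp add: closedin_diff)
  have "\<forall>f\<in>Fp \<union> Fm. \<forall>x\<in>Ysub T \<theta>. ops f x \<in> Ysub T \<theta>"
  proof (intro ballI)
    fix f x assume f: "f \<in> Fp \<union> Fm" and x: "x \<in> Ysub T \<theta>"
    have xT: "x \<in> topspace T" using x by (simp add: Ysub_def)
    have "\<forall>r\<in>\<theta>. fst r (ops f x) = snd r (ops f x)"
    proof
      fix r assume r: "r \<in> \<theta>"
      obtain a b where ab: "r = (a,b)" by (cases r)
      have "(E_op T Fp ops f a, E_op T Fp ops f b) \<in> \<theta>" using con_op[OF con f] r ab by blast
      then have "E_op T Fp ops f a x = E_op T Fp ops f b x" using x unfolding Ysub_def by fastforce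
      then have "a (ops f x) = b (ops f x)" using xT by (simp add: E_op_def split: if_splits)
      then show "fst r (ops f x) = snd r (ops f x)" using ab by simp
    qed
    then show "ops f x \<in> Ysub T \<theta>" using cs_facts(4)[OF cs f xT] by (simp add: Ysub_def)
  qed
  then show ?thesis using c unfolding closed_subs_def by blast
qed

lemma thY_Ysub:
  assumes cs: "cornish_space T le Fp Fm ops" and con: "\<theta> \<in> E_Con T le Fp Fm ops"
  shows "thY T le (Ysub T \<theta>) = \<theta>"
proof
  show "\<theta> \<subseteq> thY T le (Ysub T \<theta>)"
  proof
    fix r assume r: "r \<in> \<theta>"
    obtain a b where ab: "r = (a,b)" by (cases r)
    show "r \<in> thY T le (Ysub T \<theta>)" using r ab con_sub[OF con, of a b] by (auto simp: thY_mem Ysub_def)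
  qed
next
  show "thY T le (Ysub T \<theta>) \<subseteq> \<theta>"
  proof
    fix r assume r: "r \<in> thY T le (Ysub T \<theta>)"
    obtain \<alpha> \<beta> where ab: "r = (\<alpha>,\<beta>)" by (cases r)
    have aA: "\<alpha> \<in> E_carrier T le" and bA: "\<beta> \<in> E_carrier T le"
      and agree: "\<forall>y\<in>Ysub T \<theta>. \<alpha> y = \<beta> y" using r ab by (simp_all add: thY_mem)
    define D where "D = {x\<in>topspace T. \<alpha> x \<noteq> \<beta> x}"
    have "closedin T D" unfolding D_def using diff_closed[OF aA bA] .
    then have cD: "compactin T D" using closedin_compact_space cs_facts(1)[OF cs] by blast
    let ?f = "\<lambda>r. {x\<in>topspace T. fst r x \<noteq> snd r x}"
    have opn: "\<forall>U\<in>?f ` \<theta>. openin T U"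
    proof
      fix U assume "U \<in> ?f ` \<theta>"
      then obtain a b where "(a,b) \<in> \<theta>" "U = {x\<in>topspace T. a x \<noteq> b x}" by auto
      then show "openin T U" using con_sub[OF con] diff_open by blast
    qed
    have cov: "D \<subseteq> \<Union>(?f ` \<theta>)"
    proof
      fix x assume x: "x \<in> D"
      then have "x \<notin> Ysub T \<theta>" using agree unfolding D_def by blast
      then obtain r where "r \<in> \<theta>" "fst r x \<noteq> snd r x" using x unfolding D_def Ysub_def by blast
      then show "x \<in> \<Union>(?f ` \<theta>)" using x unfolding D_def by blast
    qed
    obtain F where F: "finite F" "F \<subseteq> ?f ` \<theta>" "D \<subseteq> \<Union>F"
      using cD opn cov unfolding compactin_def by meson
    obtain P where P: "P \<subseteq> \<theta>" "finite P" "F = ?f ` P"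
      using finite_subset_image[OF F(1) F(2)] by blast
    define p where "p = E_meet \<alpha> \<beta>"
    define q where "q = E_join \<alpha> \<beta>"
    have pA: "p \<in> E_carrier T le" and qA: "q \<in> E_carrier T le"
      unfolding p_def q_def using aA bA by (simp_all add: E_meet_mem E_join_mem)
    have pq: "(p, q) \<in> \<theta>"
    proof (rule cover_ind[OF con P(2) P(1) pA qA])
      show "\<forall>x. p x \<longrightarrow> q x" unfolding p_def q_def E_meet_def E_join_def by blast
      show "\<forall>x\<in>topspace T. q x \<and> \<not> p x \<longrightarrow> (\<exists>r\<in>P. fst r x \<noteq> snd r x)"
      proof (intro ballI impI)
        fix x assume x: "x \<in> topspace T" "q x \<and> \<not> p x"
        then have "x \<in> D" unfolding D_def p_def q_def E_meet_def E_join_def by blast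
        then have "x \<in> \<Union>F" using F(3) by blast
        then show "\<exists>r\<in>P. fst r x \<noteq> snd r x" unfolding P(3) by blast
      qed
    qed
    have e1: "E_meet \<alpha> p = p" "E_meet \<alpha> q = \<alpha>" "E_meet \<beta> p = p" "E_meet \<beta> q = \<beta>"
      unfolding p_def q_def E_meet_def E_join_def by auto
    have 1: "(p, \<alpha>) \<in> \<theta>" using con_meet[OF con con_refl[OF con aA] pq] e1 by simp
    have 2: "(p, \<beta>) \<in> \<theta>" using con_meet[OF con con_refl[OF con bA] pq] e1 by simp
    show "r \<in> \<theta>" unfolding ab using con_trans[OF con con_sym[OF con 1] 2] .
  qed
qed



lemma separate:
  assumes cs: "cornish_space T le Fp Fm ops" and Y: "closedin T Y"
    and x: "x \<in> topspace T" "x \<notin> Y"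
  shows "\<exists>\<alpha>\<in>E_carrier T le. \<exists>\<beta>\<in>E_carrier T le. (\<forall>y\<in>Y. \<alpha> y = \<beta> y) \<and> \<alpha> x \<noteq> \<beta> x"
proof -
  let ?X = "topspace T"
  define dn where "dn W \<longleftrightarrow> W \<subseteq> ?X \<and> up_set T le (?X - W)" for W
  define U where "U = {W. openin T W \<and> closedin T W \<and> x \<notin> W \<and> (up_set T le W \<or> dn W)}"
  have YX: "Y \<subseteq> ?X" using Y closedin_subset by blast
  have cY: "compactin T Y" using closedin_compact_space[OF cs_facts(1)[OF cs] Y] .
  have oU: "\<forall>W\<in>U. openin T W" unfolding U_def by blast
  have cov: "Y \<subseteq> \<Union>U"
  proof
    fix y assume yY: "y \<in> Y"
    then have yX: "y \<in> ?X" using YX by blast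
    have "y \<noteq> x" using yY x by blast
    then have "\<not> le x y \<or> \<not> le y x" using cs_facts(2)[OF cs x(1) yX] by blast
    then show "y \<in> \<Union>U"
    proof
      assume "\<not> le x y"
      then obtain V where V: "openin T V" "closedin T V" "up_set T le V" "x \<in> V" "y \<notin> V"
        using cs_facts(3)[OF cs x(1) yX] by blast
      have VX: "V \<subseteq> ?X" using V(3) unfolding up_set_def by blast
      have "openin T (?X - V)" using V(2) by (simp add: closedin_def)
      moreover have "closedin T (?X - V)" using V(1) by (simp add: closedin_diff)
      moreover have "dn (?X - V)" unfolding dn_def using V(3) VX by (simp add: Diff_Diff_Int Int_absorb1)
      ultimately have "?X - V \<in> U" unfolding U_def using V(4) by blast
      then show ?thesis using yX V(5) by blast
    next
      assume "\<not> le y x"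
      then obtain V where V: "openin T V" "closedin T V" "up_set T le V" "y \<in> V" "x \<notin> V"
        using cs_facts(3)[OF cs yX x(1)] by blast
      then have "V \<in> U" unfolding U_def by blast
      then show ?thesis using V(4) by blast
    qed
  qed
  obtain F where F: "finite F" "F \<subseteq> U" "Y \<subseteq> \<Union>F"
    using cY oU cov unfolding compactin_def by meson
  define Dn where "Dn = \<Union>{W\<in>F. \<not> up_set T le W}"
  define Up where "Up = \<Union>{W\<in>F. up_set T le W}"
  have FU: "\<And>W. W \<in> F \<Longrightarrow> openin T W \<and> closedin T W \<and> x \<notin> W \<and> (up_set T le W \<or> dn W)"
    using F(2) unfolding U_def by blast
  have fin1: "finite {W\<in>F. \<not> up_set T le W}" and fin2: "finite {W\<in>F. up_set T le W}" using F(1) by simp_all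
  have oDn: "openin T Dn" unfolding Dn_def by (rule openin_Union) (use FU in blast)
  have cDn: "closedin T Dn" unfolding Dn_def by (rule closedin_Union[OF fin1]) (use FU in blast)
  have oUp: "openin T Up" unfolding Up_def by (rule openin_Union) (use FU in blast)
  have cUp: "closedin T Up" unfolding Up_def by (rule closedin_Union[OF fin2]) (use FU in blast)
  define S1 where "S1 = ?X - Dn"
  define S2 where "S2 = S1 \<inter> Up"
  have oS1: "openin T S1" unfolding S1_def using cDn by (simp add: openin_diff)
  have cS1: "closedin T S1" unfolding S1_def using oDn by (simp add: closedin_diff)
  have oS2: "openin T S2" unfolding S2_def using oS1 oUp by (simp add: openin_Int)
  have cS2: "closedin T S2" unfolding S2_def using cS1 cUp by (simp add: closedin_Int)
  have uS1: "\<forall>a\<in>S1. \<forall>b\<in>?X. le a b \<longrightarrow> b \<in> S1"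
  proof (intro ballI impI)
    fix a b assume a: "a \<in> S1" and b: "b \<in> ?X" and ab: "le a b"
    show "b \<in> S1"
    proof (rule ccontr)
      assume "b \<notin> S1"
      then obtain W where W: "W \<in> F" "\<not> up_set T le W" "b \<in> W" using b unfolding S1_def Dn_def by blast
      then have "dn W" using FU by blast
      then have u: "up_set T le (?X - W)" unfolding dn_def by blast
      have "a \<in> ?X - W" using a W unfolding S1_def Dn_def by blast
      then have "b \<in> ?X - W" using u b ab unfolding up_set_def by blast
      then show False using W(3) by blast
    qed
  qed
  have uUp: "\<forall>a\<in>Up. \<forall>b\<in>?X. le a b \<longrightarrow> b \<in> Up"
  proof (intro ballI impI)
    fix a b assume a: "a \<in> Up" and b: "b \<in> ?X" and ab: "le a b"
    then obtain W where W: "W \<in> F" "up_set T le W" "a \<in> W" unfolding Up_def by blast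
    then have "b \<in> W" using b ab unfolding up_set_def by blast
    then show "b \<in> Up" using W unfolding Up_def by blast
  qed
  have uS2: "\<forall>a\<in>S2. \<forall>b\<in>?X. le a b \<longrightarrow> b \<in> S2"
    using uS1 uUp unfolding S2_def by blast
  have A1: "(\<lambda>z. z \<in> S2) \<in> E_carrier T le" by (rule E_set[OF oS2 cS2 uS2])
  have A2: "(\<lambda>z. z \<in> S1) \<in> E_carrier T le" by (rule E_set[OF oS1 cS1 uS1])
  have xD: "x \<notin> Dn" "x \<notin> Up" using FU unfolding Dn_def Up_def by blast+
  have "x \<in> S1" "x \<notin> S2" using x(1) xD unfolding S1_def S2_def by blast+
  moreover have "\<forall>y\<in>Y. (y \<in> S2) = (y \<in> S1)"
  proof
    fix y assume y: "y \<in> Y"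
    show "(y \<in> S2) = (y \<in> S1)"
    proof (cases "y \<in> Dn")
      case True then show ?thesis unfolding S2_def S1_def by blast
    next
      case False
      obtain W where "W \<in> F" "y \<in> W" using y F(3) by blast
      then have "y \<in> Up" using False unfolding Up_def Dn_def by blast
      then show ?thesis unfolding S2_def by blast
    qed
  qed
  ultimately have P: "(\<forall>y\<in>Y. (y \<in> S2) = (y \<in> S1)) \<and> (x \<in> S2) \<noteq> (x \<in> S1)" by simp
  show ?thesis by (rule bexI[OF bexI[OF _ A2] A1]) (rule P)
qed

lemma Ysub_thY:
  assumes cs: "cornish_space T le Fp Fm ops" and Y: "Y \<in> closed_subs T Fp Fm ops"
  shows "Ysub T (thY T le Y) = Y"
proof
  have cY: "closedin T Y" using Y unfolding closed_subs_def by blast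
  then have YX: "Y \<subseteq> topspace T" using closedin_subset by blast
  show "Y \<subseteq> Ysub T (thY T le Y)" unfolding Ysub_def thY_def using YX by blast
  show "Ysub T (thY T le Y) \<subseteq> Y"
  proof
    fix x assume x: "x \<in> Ysub T (thY T le Y)"
    then have xX: "x \<in> topspace T" unfolding Ysub_def by blast
    show "x \<in> Y"
    proof (rule ccontr)
      assume "x \<notin> Y"
      then obtain \<alpha> \<beta> where ab: "\<alpha> \<in> E_carrier T le" "\<beta> \<in> E_carrier T le" "\<forall>y\<in>Y. \<alpha> y = \<beta> y" "\<alpha> x \<noteq> \<beta> x"
        using separate[OF cs cY xX] by blast
      then have "(\<alpha>, \<beta>) \<in> thY T le Y" by (simp add: thY_mem)
      then have "\<alpha> x = \<beta> x" using x unfolding Ysub_def by fastforce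
      with ab(4) show False by (rule notE)
    qed
  qed
qed



theorem lemma5p5:
  fixes T :: "'a topology" and le :: "'a \<Rightarrow> 'a \<Rightarrow> bool"
    and Fp Fm :: "'f set" and ops :: "'f \<Rightarrow> 'a \<Rightarrow> 'a"
  assumes "cornish_space T le Fp Fm ops"
  shows "(\<exists>\<Phi>. bij_betw \<Phi> (E_Con T le Fp Fm ops) (closed_subs T Fp Fm ops) \<and>
            (\<forall>\<theta>\<in>E_Con T le Fp Fm ops. \<forall>\<psi>\<in>E_Con T le Fp Fm ops.
               \<theta> \<subseteq> \<psi> \<longleftrightarrow> \<Phi> \<psi> \<subseteq> \<Phi> \<theta>))
       \<and> (E_simple T le Fp Fm ops \<longleftrightarrow>
            (\<forall>S\<in>closed_subs T Fp Fm ops. S = {} \<or> S = topspace T))"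
proof -
  note cs = assms
  let ?C = "E_Con T le Fp Fm ops" and ?S = "closed_subs T Fp Fm ops" and ?A = "E_carrier T le"
  have c1: "\<And>\<theta>. \<theta> \<in> ?C \<Longrightarrow> Ysub T \<theta> \<in> ?S" using Ysub_closed[OF cs] .
  have c2: "\<And>Y. Y \<in> ?S \<Longrightarrow> thY T le Y \<in> ?C"
  proof -
    fix Y assume Y: "Y \<in> ?S"
    have "Y \<subseteq> topspace T" using Y closedin_subset unfolding closed_subs_def by blast
    moreover have "\<forall>f\<in>Fp \<union> Fm. \<forall>x\<in>Y. ops f x \<in> Y" using Y unfolding closed_subs_def by blast
    ultimately show "thY T le Y \<in> ?C" using thY_con[OF cs] by blast
  qed
  have c3: "\<And>\<theta>. \<theta> \<in> ?C \<Longrightarrow> thY T le (Ysub T \<theta>) = \<theta>" using thY_Ysub[OF cs] .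
  have c4: "\<And>Y. Y \<in> ?S \<Longrightarrow> Ysub T (thY T le Y) = Y" using Ysub_thY[OF cs] .
  have anti: "\<And>Y Z. Y \<subseteq> Z \<Longrightarrow> thY T le Z \<subseteq> thY T le Y" unfolding thY_def by blast
  have bij: "bij_betw (Ysub T) ?C ?S"
    by (rule bij_betw_byWitness[where f' = "thY T le"]) (use c1 c2 c3 c4 in blast)+
  have ord: "\<forall>\<theta>\<in>?C. \<forall>\<psi>\<in>?C. \<theta> \<subseteq> \<psi> \<longleftrightarrow> Ysub T \<psi> \<subseteq> Ysub T \<theta>"
  proof (intro ballI iffI)
    fix \<theta> \<psi> :: "(('a \<Rightarrow> bool) \<times> ('a \<Rightarrow> bool)) set" assume "\<theta> \<subseteq> \<psi>" then show "Ysub T \<psi> \<subseteq> Ysub T \<theta>" unfolding Ysub_def by blast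
  next
    fix \<theta> \<psi> :: "(('a \<Rightarrow> bool) \<times> ('a \<Rightarrow> bool)) set" assume t: "\<theta> \<in> ?C" and p: "\<psi> \<in> ?C" and sub: "Ysub T \<psi> \<subseteq> Ysub T \<theta>"
    from sub have "thY T le (Ysub T \<theta>) \<subseteq> thY T le (Ysub T \<psi>)" by (rule anti)
    then show "\<theta> \<subseteq> \<psi>" using c3[OF t] c3[OF p] by simp
  qed
  have XS: "topspace T \<in> ?S" unfolding closed_subs_def using cs_facts(4)[OF cs] by blast
  have ES: "{} \<in> ?S" unfolding closed_subs_def by simp
  have idX: "Id_on ?A = thY T le (topspace T)"
  proof (rule set_eqI)
    fix r :: "('a \<Rightarrow> bool) \<times> ('a \<Rightarrow> bool)"
    obtain a b where ab: "r = (a,b)" by (cases r)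
    have "(a, b) \<in> thY T le (topspace T) \<longleftrightarrow> (a, b) \<in> Id_on ?A"
    proof
      assume h: "(a, b) \<in> thY T le (topspace T)"
      have "a = b"
      proof
        fix x show "a x = b x"
        proof (cases "x \<in> topspace T")
          case True then show ?thesis using h by (simp add: thY_mem)
        next
          case False
          have "a \<in> ?A" "b \<in> ?A" using h by (simp_all add: thY_mem)
          then show ?thesis using E_out[of a T le x] E_out[of b T le x] False by blast
        qed
      qed
      then show "(a, b) \<in> Id_on ?A" using h by (simp add: thY_mem Id_on_def)
    next
      assume "(a, b) \<in> Id_on ?A" then show "(a, b) \<in> thY T le (topspace T)" by (auto simp: thY_mem)
    qed
    then show "r \<in> Id_on ?A \<longleftrightarrow> r \<in> thY T le (topspace T)" using ab by simp
  qed
  have tot: "?A \<times> ?A = thY T le {}" unfolding thY_def by auto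
  have simp_iff: "E_simple T le Fp Fm ops \<longleftrightarrow> (\<forall>S\<in>?S. S = {} \<or> S = topspace T)"
  proof
    assume sim: "E_simple T le Fp Fm ops"
    show "\<forall>S\<in>?S. S = {} \<or> S = topspace T"
    proof
      fix S assume S: "S \<in> ?S"
      have "thY T le S \<in> ?C" using c2[OF S] .
      then have "thY T le S = thY T le (topspace T) \<or> thY T le S = thY T le {}"
        using sim unfolding E_simple_def idX tot by blast
      then have "Ysub T (thY T le S) = Ysub T (thY T le (topspace T)) \<or> Ysub T (thY T le S) = Ysub T (thY T le {})"
        by auto
      then show "S = {} \<or> S = topspace T" using c4[OF S] c4[OF XS] c4[OF ES] by auto
    qed
  next
    assume all: "\<forall>S\<in>?S. S = {} \<or> S = topspace T"
    have "?C = {thY T le (topspace T), thY T le {}}"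
    proof
      show "?C \<subseteq> {thY T le (topspace T), thY T le {}}"
      proof
        fix \<theta> assume t: "\<theta> \<in> ?C"
        have "Ysub T \<theta> = {} \<or> Ysub T \<theta> = topspace T" using all c1[OF t] by blast
        then show "\<theta> \<in> {thY T le (topspace T), thY T le {}}" using c3[OF t] by auto
      qed
      show "{thY T le (topspace T), thY T le {}} \<subseteq> ?C" using c2[OF XS] c2[OF ES] by blast
    qed
    then show "E_simple T le Fp Fm ops" unfolding E_simple_def idX tot .
  qed
  show ?thesis using bij ord simp_iff by blast
qed


end
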